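(* Let $Z\in\mathbb{R}^{m\times n}$ and $\lambda\ge 0$, and let $\breve{k}$ be the number of singular values of $Z$ that are strictly larger than $\lambda$. Let $k\ge \breve{k}$ and let $Q\in\mathbb{R}^{m\times k}$ have orthonormal columns ($Q^\top Q=I$) such that the column span of $Q$ contains the subspace spanned by the top $\breve{k}$ left singular vectors of $Z$ (those associated with the singular values larger than $\lambda$). Then $\mathrm{SVT}_\lambda(Z)=Q\,\mathrm{SVT}_\lambda(Q^\top Z)$.
   Context: For a matrix $A$ with singular value decomposition $A=U\Sigma V^\top$ and $\lambda\ge 0$, the singular value thresholding operator is $\mathrm{SVT}_\lambda(A)=U(\Sigma-\lambda I)_+V^\top$, where $(\cdot)_+$ takes the entrywise maximum with $0$; equivalently $\mathrm{SVT}_\lambda(A)=\arg\min_X \frac12\|X-A\|_F^2+\lambda\|X\|_*$, with $\|\cdot\|_*$ the nuclear norm (sum of singular values). *)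

theory Defs
  imports "HOL-Analysis.Analysis"
begin

definition outer :: "real^'m \<Rightarrow> real^'n \<Rightarrow> real^'n^'m" where
  "outer u v = (\<chi> i j. u $ i * v $ j)"

definition compact_svd ::
  "real^'n^'m \<Rightarrow> nat \<Rightarrow> (nat \<Rightarrow> real) \<Rightarrow> (nat \<Rightarrow> real^'m) \<Rightarrow> (nat \<Rightarrow> real^'n) \<Rightarrow> bool" where
  "compact_svd A r s u v \<longleftrightarrow>
     (\<forall>i<r. s i > 0) \<and>
     (\<forall>i<r. \<forall>j<r. u i \<bullet> u j = (if i = j then 1 else 0)) \<and>
     (\<forall>i<r. \<forall>j<r. v i \<bullet> v j = (if i = j then 1 else 0)) \<and>
     A = (\<Sum>i<r. s i *\<^sub>R outer (u i) (v i))"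

text \<open>Singular value thresholding SVT_lambda(A) = U (Sigma - lambda I)_+ V^T,
  computed from an SVD of A (well defined: independent of the chosen SVD).\<close>
definition svt :: "real \<Rightarrow> real^'n^'m \<Rightarrow> real^'n^'m" where
  "svt lam A = (SOME X. \<exists>r s u v. compact_svd A r s u v \<and>
       X = (\<Sum>i<r. max (s i - lam) 0 *\<^sub>R outer (u i) (v i)))"

end

theory Submission imports Defs "HOL-Computational_Algebra.Polynomial" begin


definition orthon :: "(nat \<Rightarrow> 'a::real_inner) \<Rightarrow> nat set \<Rightarrow> bool" where
  "orthon w I \<longleftrightarrow> (\<forall>i\<in>I. \<forall>j\<in>I. w i \<bullet> w j = (if i = j then 1 else 0))"

definition gsvd :: "real^'n^'m \<Rightarrow> nat set \<Rightarrow> (nat \<Rightarrow> real) \<Rightarrow> (nat \<Rightarrow> real^'m) \<Rightarrow> (nat \<Rightarrow> real^'n) \<Rightarrow> bool" where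
  "gsvd A I s u v \<longleftrightarrow> finite I \<and> (\<forall>i\<in>I. s i > 0) \<and> orthon u I \<and> orthon v I \<and>
     A = (\<Sum>i\<in>I. s i *\<^sub>R outer (u i) (v i))"

lemma compact_svd_gsvd: "compact_svd A r s u v \<longleftrightarrow> gsvd A {..<r} s u v"
  unfolding compact_svd_def gsvd_def orthon_def by auto

lemma outer_mv: "outer u v *v x = (v \<bullet> x) *\<^sub>R u"
  by (simp add: outer_def matrix_vector_mult_def inner_vec_def vec_eq_iff sum_distrib_left mult_ac)

lemma sum_mv: "(\<Sum>i\<in>I. f i) *v x = (\<Sum>i\<in>I. f i *v x)"
  by (induction I rule: infinite_finite_induct) (auto simp: matrix_vector_mult_add_rdistrib)

lemma scaleR_mv: "(c *\<^sub>R (A::real^'n^'m)) *v x = c *\<^sub>R (A *v x)"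
  by (simp add: scaleR_matrix_vector_assoc)

lemma outer_sum_mv: "(\<Sum>i\<in>I. c i *\<^sub>R outer (u i) (v i)) *v x = (\<Sum>i\<in>I. (c i * (v i \<bullet> x)) *\<^sub>R u i)"
  by (simp add: sum_mv scaleR_mv outer_mv)

lemma transpose_inner: "(transpose M *v y) \<bullet> x = y \<bullet> ((M::real^'n^'m) *v x)"
  by (simp add: dot_lmul_matrix)

lemma mv_scaleR: "(M::real^'n^'m) *v (c *\<^sub>R x) = c *\<^sub>R (M *v x)"
  by (simp add: matrix_vector_mult_def vec_eq_iff sum_distrib_left mult_ac)

lemma mm_outer: "M ** outer u v = outer (M *v u) v"
  by (simp add: matrix_eq outer_mv flip: matrix_vector_mul_assoc)
     (simp add: mv_scaleR outer_mv)

lemma mm_sum: "(M::real^'k^'m) ** (\<Sum>i\<in>I. f i) = (\<Sum>i\<in>I. M ** f i)"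
  by (induction I rule: infinite_finite_induct) (auto simp: matrix_add_ldistrib)

lemma mm_scaleR: "(M::real^'k^'m) ** (c *\<^sub>R A) = c *\<^sub>R (M ** A)"
  by (simp add: matrix_eq scaleR_mv mv_scaleR flip: matrix_vector_mul_assoc)

lemma orthon_coef:
  assumes "orthon w I" "finite I" "j \<in> I"
  shows "w j \<bullet> (\<Sum>i\<in>I. c i *\<^sub>R w i) = c j"
proof -
  have "w j \<bullet> (\<Sum>i\<in>I. c i *\<^sub>R w i) = (\<Sum>i\<in>I. if j = i then c i else 0)"
    unfolding inner_sum_right using assms by (intro sum.cong) (auto simp: orthon_def)
  also have "\<dots> = c j" using assms by simp
  finally show ?thesis .
qed

lemma orthon_coef0:
  assumes "orthon w I" "J \<subseteq> I" "j \<in> I" "j \<notin> J"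
  shows "w j \<bullet> (\<Sum>i\<in>J. c i *\<^sub>R w i) = 0"
  unfolding inner_sum_right
proof (intro sum.neutral ballI)
  fix x assume "x \<in> J"
  then have "x \<in> I" "x \<noteq> j" using assms by auto
  then show "w j \<bullet> c x *\<^sub>R w x = 0" using assms by (simp add: orthon_def)
qed

lemma orthon_norm2:
  assumes "orthon w I" "finite I"
  shows "(\<Sum>i\<in>I. c i *\<^sub>R w i) \<bullet> (\<Sum>i\<in>I. c i *\<^sub>R w i) = (\<Sum>i\<in>I. (c i)^2)"
proof -
  have "(\<Sum>i\<in>I. c i *\<^sub>R w i) \<bullet> (\<Sum>i\<in>I. c i *\<^sub>R w i) = (\<Sum>j\<in>I. c j * (w j \<bullet> (\<Sum>i\<in>I. c i *\<^sub>R w i)))"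
    by (simp add: inner_sum_left)
  also have "\<dots> = (\<Sum>j\<in>I. (c j)^2)" using orthon_coef[OF assms] by (simp add: power2_eq_square)
  finally show ?thesis .
qed

lemma bessel:
  assumes "orthon w I" "finite I"
  shows "(\<Sum>i\<in>I. (w i \<bullet> y)^2) \<le> y \<bullet> y"
proof -
  define p where "p = (\<Sum>i\<in>I. (w i \<bullet> y) *\<^sub>R w i)"
  have pp: "p \<bullet> p = (\<Sum>i\<in>I. (w i \<bullet> y)^2)" unfolding p_def by (rule orthon_norm2[OF assms])
  have yp: "y \<bullet> p = (\<Sum>i\<in>I. (w i \<bullet> y)^2)" unfolding p_def
    by (simp add: inner_sum_right power2_eq_square inner_commute)
  have "0 \<le> (y - p) \<bullet> (y - p)" by simp
  also have "\<dots> = y \<bullet> y - 2 * (y \<bullet> p) + p \<bullet> p" by (simp add: algebra_simps inner_commute)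
  finally show ?thesis using pp yp by simp
qed

lemma gsvd_mv:
  assumes "gsvd A I s u v"
  shows "A *v x = (\<Sum>i\<in>I. (s i * (v i \<bullet> x)) *\<^sub>R u i)"
  using assms unfolding gsvd_def by (simp add: outer_sum_mv)

lemma gsvd_tmv:
  assumes "gsvd A I s u v"
  shows "transpose A *v y = (\<Sum>i\<in>I. (s i * (u i \<bullet> y)) *\<^sub>R v i)"
proof -
  have "(transpose A *v y) \<bullet> x = (\<Sum>i\<in>I. (s i * (u i \<bullet> y)) *\<^sub>R v i) \<bullet> x" for x
    unfolding transpose_inner gsvd_mv[OF assms]
    by (simp add: inner_sum_right inner_sum_left mult_ac inner_commute del: transpose_matrix_vector)
  then show ?thesis by (metis inner_commute vector_eq_rdot)
qed

lemma gsvd_v: assumes "gsvd A I s u v" "j \<in> I" shows "A *v v j = s j *\<^sub>R u j"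
proof -
  have "A *v v j = (\<Sum>i\<in>I. (s i * (v j \<bullet> v i)) *\<^sub>R u i)"
    by (simp add: gsvd_mv[OF assms(1)] inner_commute)
  also have "\<dots> = (\<Sum>i\<in>I. if i = j then s j *\<^sub>R u j else 0)"
    using assms by (intro sum.cong) (auto simp: gsvd_def orthon_def)
  also have "\<dots> = s j *\<^sub>R u j" using assms by (simp add: gsvd_def)
  finally show ?thesis .
qed

lemma gsvd_u: assumes "gsvd A I s u v" "j \<in> I" shows "transpose A *v u j = s j *\<^sub>R v j"
proof -
  have "transpose A *v u j = (\<Sum>i\<in>I. (s i * (u j \<bullet> u i)) *\<^sub>R v i)"
    unfolding gsvd_tmv[OF assms(1)] by (simp add: inner_commute)
  also have "\<dots> = (\<Sum>i\<in>I. if i = j then s j *\<^sub>R v j else 0)"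
    using assms by (intro sum.cong) (auto simp: gsvd_def orthon_def)
  also have "\<dots> = s j *\<^sub>R v j" using assms by (simp add: gsvd_def)
  finally show ?thesis .
qed




lemma interp:
  fixes h :: "real \<Rightarrow> real"
  shows "finite S \<Longrightarrow> \<exists>p. \<forall>x\<in>S. poly p x = h x"
proof (induction S rule: finite_induct)
  case empty then show ?case by auto
next
  case (insert a S)
  then obtain p where p: "\<forall>x\<in>S. poly p x = h x" by blast
  define q where "q = (\<Prod>s\<in>S. [:-s, 1:])"
  have pq: "poly q x = (\<Prod>s\<in>S. x - s)" for x by (simp add: q_def poly_prod)
  have qa: "poly q a \<noteq> 0" unfolding pq using insert by auto
  have qx: "poly q x = 0" if "x \<in> S" for x unfolding pq using that insert(1)
    by (simp add: prod_zero_iff)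
  define p' where "p' = p + smult ((h a - poly p a) / poly q a) q"
  have "\<forall>x\<in>insert a S. poly p' x = h x"
    using p qa qx by (auto simp: p'_def)
  then show ?case by blast
qed

definition AtA :: "real^'n^'m \<Rightarrow> real^'n \<Rightarrow> real^'n" where
  "AtA A y = transpose A *v (A *v y)"

lemma gsvd_AtA:
  assumes "gsvd A I s u v" "j \<in> I"
  shows "v j \<bullet> AtA A x = (s j)^2 * (v j \<bullet> x)"
proof -
  have f: "finite I" and ou: "orthon u I" and ov: "orthon v I" using assms by (auto simp: gsvd_def)
  have "v j \<bullet> AtA A x = s j * (u j \<bullet> (A *v x))"
    unfolding AtA_def gsvd_tmv[OF assms(1)] orthon_coef[OF ov f assms(2)] ..
  also have "u j \<bullet> (A *v x) = s j * (v j \<bullet> x)"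
    unfolding gsvd_mv[OF assms(1)] orthon_coef[OF ou f assms(2)] ..
  finally show ?thesis by (simp add: power2_eq_square)
qed

lemma gsvd_pow:
  assumes "gsvd A I s u v"
  shows "A *v ((AtA A ^^ k) x) = (\<Sum>i\<in>I. (s i ^ (2*k+1) * (v i \<bullet> x)) *\<^sub>R u i)"
proof (induction k arbitrary: x)
  case 0 then show ?case by (simp add: gsvd_mv[OF assms])
next
  case (Suc k)
  have "A *v ((AtA A ^^ Suc k) x) = A *v ((AtA A ^^ k) (AtA A x))"
    by (simp add: funpow_Suc_right del: funpow.simps)
  also have "\<dots> = (\<Sum>i\<in>I. (s i ^ (2*k+1) * (v i \<bullet> AtA A x)) *\<^sub>R u i)" by (rule Suc)
  also have "\<dots> = (\<Sum>i\<in>I. (s i ^ (2*Suc k+1) * (v i \<bullet> x)) *\<^sub>R u i)"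
    by (intro sum.cong refl) (simp add: gsvd_AtA[OF assms] power2_eq_square)
  finally show ?case .
qed

lemma gsvd_poly:
  assumes "gsvd A I s u v" and p: "\<forall>i\<in>I. poly p ((s i)^2) = max (s i - lam) 0 / s i"
  shows "(\<Sum>i\<in>I. max (s i - lam) 0 *\<^sub>R outer (u i) (v i)) *v x
       = (\<Sum>k\<le>degree p. coeff p k *\<^sub>R (A *v ((AtA A ^^ k) x)))"
proof -
  have "(\<Sum>k\<le>degree p. coeff p k *\<^sub>R (A *v ((AtA A ^^ k) x)))
     = (\<Sum>k\<le>degree p. \<Sum>i\<in>I. (coeff p k * (s i ^ (2*k+1) * (v i \<bullet> x))) *\<^sub>R u i)"
    by (simp add: gsvd_pow[OF assms(1)] scaleR_sum_right)
  also have "\<dots> = (\<Sum>i\<in>I. \<Sum>k\<le>degree p. (coeff p k * (s i ^ (2*k+1) * (v i \<bullet> x))) *\<^sub>R u i)"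
    by (rule sum.swap)
  also have "\<dots> = (\<Sum>i\<in>I. (s i * poly p ((s i)^2) * (v i \<bullet> x)) *\<^sub>R u i)"
  proof (intro sum.cong refl)
    fix i
    have "(\<Sum>k\<le>degree p. (coeff p k * (s i ^ (2*k+1) * (v i \<bullet> x))) *\<^sub>R u i)
       = (\<Sum>k\<le>degree p. coeff p k * (s i ^ (2*k+1) * (v i \<bullet> x))) *\<^sub>R u i"
      by (simp add: scaleR_sum_left)
    also have "(\<Sum>k\<le>degree p. coeff p k * (s i ^ (2*k+1) * (v i \<bullet> x)))
       = s i * poly p ((s i)^2) * (v i \<bullet> x)"
      by (simp add: poly_altdef sum_distrib_left sum_distrib_right power_mult power_add mult_ac power2_eq_square power_mult_distrib)
    finally show "(\<Sum>k\<le>degree p. (coeff p k * (s i ^ (2*k+1) * (v i \<bullet> x))) *\<^sub>R u i)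
       = (s i * poly p ((s i)^2) * (v i \<bullet> x)) *\<^sub>R u i" .
  qed
  also have "\<dots> = (\<Sum>i\<in>I. (max (s i - lam) 0 * (v i \<bullet> x)) *\<^sub>R u i)"
    using p assms(1) by (intro sum.cong refl) (auto simp: gsvd_def)
  finally show ?thesis by (simp add: outer_sum_mv)
qed

lemma gsvd_unique:
  assumes a: "gsvd A I s u v" and b: "gsvd A J s' u' v'"
  shows "(\<Sum>i\<in>I. max (s i - lam) 0 *\<^sub>R outer (u i) (v i))
       = (\<Sum>i\<in>J. max (s' i - lam) 0 *\<^sub>R outer (u' i) (v' i))"
proof -
  define h where "h t = max (sqrt t - lam) 0 / sqrt t" for t
  have "finite ((\<lambda>i. (s i)^2) ` I \<union> (\<lambda>i. (s' i)^2) ` J)"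
    using a b by (simp add: gsvd_def)
  then obtain p where p: "\<forall>x\<in>(\<lambda>i. (s i)^2) ` I \<union> (\<lambda>i. (s' i)^2) ` J. poly p x = h x"
    using interp by blast
  have pa: "\<forall>i\<in>I. poly p ((s i)^2) = max (s i - lam) 0 / s i"
    using p a by (auto simp: h_def gsvd_def)
  have pb: "\<forall>i\<in>J. poly p ((s' i)^2) = max (s' i - lam) 0 / s' i"
    using p b by (auto simp: h_def gsvd_def)
  show ?thesis unfolding matrix_eq
    using gsvd_poly[OF a pa] gsvd_poly[OF b pb] by simp
qed

lemma svt_gsvd:
  assumes a: "gsvd A I s u v" and ex: "\<exists>r s u v. compact_svd A r s u v"
  shows "svt lam A = (\<Sum>i\<in>I. max (s i - lam) 0 *\<^sub>R outer (u i) (v i))"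
proof -
  have "\<exists>X. \<exists>r s u v. compact_svd A r s u v \<and>
       X = (\<Sum>i<r. max (s i - lam) 0 *\<^sub>R outer (u i) (v i))" using ex by blast
  from someI_ex[OF this] obtain r s' u' v' where
    "compact_svd A r s' u' v'" and eq: "svt lam A = (\<Sum>i<r. max (s' i - lam) 0 *\<^sub>R outer (u' i) (v' i))"
    unfolding svt_def by blast
  then show ?thesis using gsvd_unique[OF a, of "{..<r}" s' u' v' lam]
    by (simp add: compact_svd_gsvd)
qed




lemma deflate:
  fixes A :: "real^'n^'m"
  assumes "A \<noteq> 0"
  obtains \<sigma> uu x where "\<sigma> > 0" "uu \<bullet> uu = 1" "x \<bullet> x = 1"
    "(A - \<sigma> *\<^sub>R outer uu x) *v x = 0"
    "\<And>y. uu \<bullet> ((A - \<sigma> *\<^sub>R outer uu x) *v y) = 0"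
    "\<And>y. A *v y = 0 \<Longrightarrow> (A - \<sigma> *\<^sub>R outer uu x) *v y = 0"
    "A *v x \<noteq> 0"
proof -
  have cs: "compact (sphere (0::real^'n) 1)" by simp
  obtain x0 :: "real^'n" where "norm x0 = 1" using vector_choose_size[of 1] by auto
  then have ne: "sphere (0::real^'n) 1 \<noteq> {}" by auto
  have cont: "continuous_on (sphere 0 1) (\<lambda>z. norm (A *v z))"
    by (intro continuous_intros)
  obtain x where xs: "x \<in> sphere 0 1" and xmax: "\<And>z. z \<in> sphere 0 1 \<Longrightarrow> norm (A *v z) \<le> norm (A *v x)"
    using continuous_attains_sup[OF cs ne cont] by blast
  define \<sigma> where "\<sigma> = norm (A *v x)"
  have nx: "norm x = 1" using xs by simp
  have xx: "x \<bullet> x = 1" using nx by (simp add: norm_eq_1)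
  have bound: "norm (A *v z) \<le> \<sigma> * norm z" for z
  proof (cases "z = 0")
    case True then show ?thesis by simp
  next
    case False
    then have "(1 / norm z) *\<^sub>R z \<in> sphere 0 1" by simp
    from xmax[OF this] have "norm (A *v z) / norm z \<le> \<sigma>"
      by (simp add: mv_scaleR \<sigma>_def)
    then show ?thesis using False by (simp add: divide_le_eq mult.commute)
  qed
  obtain z where "A *v z \<noteq> 0" using assms by (metis matrix_eq matrix_vector_mult_0)
  then have "0 < norm (A *v z)" by simp
  also have "\<dots> \<le> \<sigma> * norm z" by (rule bound)
  finally have spos: "\<sigma> > 0" by (simp add: zero_less_mult_iff)
  have Axx: "(A *v x) \<bullet> (A *v x) = \<sigma>^2" by (simp add: \<sigma>_def power2_norm_eq_inner)
  have orth: "(A *v x) \<bullet> (A *v y) = 0" if yx: "y \<bullet> x = 0" for y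
  proof -
    have xy: "x \<bullet> y = 0" using yx by (simp add: inner_commute)
    define a where "a = (A *v x) \<bullet> (A *v y)"
    define b where "b = (A *v y) \<bullet> (A *v y)"
    define c where "c = y \<bullet> y"
    define K where "K = \<sigma>^2 * c - b"
    have key: "2 * t * a \<le> t^2 * K" for t
    proof -
      have "norm (A *v (x + t *\<^sub>R y))^2 \<le> (\<sigma> * norm (x + t *\<^sub>R y))^2"
        using bound by (simp add: power_mono)
      moreover have "norm (A *v (x + t *\<^sub>R y))^2 = \<sigma>^2 + 2 * t * a + t^2 * b"
        unfolding power2_norm_eq_inner by (simp add: power2_norm_eq_inner matrix_vector_right_distrib mv_scaleR Axx a_def b_def
            inner_add_left inner_add_right inner_commute power2_eq_square algebra_simps)
      moreover have "(\<sigma> * norm (x + t *\<^sub>R y))^2 = \<sigma>^2 * (1 + t^2 * c)"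
        unfolding power_mult_distrib power2_norm_eq_inner by (simp add: power_mult_distrib power2_norm_eq_inner inner_add_left inner_add_right
            xx yx xy c_def power2_eq_square algebra_simps)
      ultimately show ?thesis by (simp add: K_def algebra_simps)
    qed
    define d where "d = \<bar>K\<bar> + 1"
    have dpos: "d > 0" by (simp add: d_def)
    have "2 * (a/d) * a \<le> (a/d)^2 * K" by (rule key)
    then have "(2 * (a/d) * a) * d^2 \<le> ((a/d)^2 * K) * d^2"
      by (rule mult_right_mono) simp
    also have "((a/d)^2 * K) * d^2 = a^2 * K" using dpos by (simp add: power_divide field_simps)
    also have "\<dots> \<le> a^2 * \<bar>K\<bar>" by (simp add: mult_left_mono)
    finally have "2 * a^2 * d \<le> a^2 * \<bar>K\<bar>" using dpos by (simp add: power2_eq_square field_simps)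
    then have "a^2 * (\<bar>K\<bar> + 2) \<le> 0" by (simp add: d_def algebra_simps)
    then have "a^2 \<le> 0" by (smt (verit) mult_nonneg_nonneg zero_le_power2 mult_le_0_iff)
    then show ?thesis by (simp add: a_def)
  qed
  define uu where "uu = (1/\<sigma>) *\<^sub>R (A *v x)"
  have uu1: "uu \<bullet> uu = 1" using spos Axx by (simp add: uu_def power2_eq_square)
  have uAy: "uu \<bullet> (A *v y) = \<sigma> * (x \<bullet> y)" for y
  proof -
    define y' where "y' = y - (x \<bullet> y) *\<^sub>R x"
    have y'x: "y' \<bullet> x = 0" by (simp add: y'_def inner_diff_left xx inner_commute[of y x])
    have "A *v y = (x \<bullet> y) *\<^sub>R (A *v x) + A *v y'"
      by (simp add: y'_def matrix_vector_right_distrib mv_scaleR algebra_simps)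
    then have "uu \<bullet> (A *v y) = (1/\<sigma>) * ((x \<bullet> y) * \<sigma>^2 + (A *v x) \<bullet> (A *v y'))"
      by (simp add: uu_def inner_add_right Axx add_divide_distrib)
    also have "\<dots> = \<sigma> * (x \<bullet> y)" using orth[OF y'x] spos by (simp add: power2_eq_square)
    finally show ?thesis .
  qed
  define A' where "A' = A - \<sigma> *\<^sub>R outer uu x"
  have A'y: "A' *v y = A *v y - (\<sigma> * (x \<bullet> y)) *\<^sub>R uu" for y
    by (simp add: A'_def matrix_vector_mult_diff_rdistrib scaleR_mv outer_mv)
  have "A' *v x = 0" using spos by (simp add: A'y xx uu_def)
  moreover have "uu \<bullet> (A' *v y) = 0" for y by (simp add: A'y uAy uu1 inner_diff_right)
  moreover have "A' *v y = 0" if "A *v y = 0" for y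
  proof -
    have "\<sigma> * (x \<bullet> y) = 0" using uAy[of y] that by simp
    then show ?thesis using that by (simp add: A'y)
  qed
  moreover have "A *v x \<noteq> 0" using spos Axx by auto
  ultimately show ?thesis using that[OF spos uu1 xx] unfolding A'_def by blast
qed

lemma null_subspace: "subspace {y. (A::real^'n^'m) *v y = 0}"
  by (auto simp: subspace_def matrix_vector_right_distrib mv_scaleR)

lemma svd_step:
  fixes A :: "real^'n^'m"
  assumes "A \<noteq> 0"
    and IH: "\<And>A'::real^'n^'m. dim {y. A *v y = 0} < dim {y. A' *v y = 0} \<Longrightarrow> \<exists>r s u v. compact_svd A' r s u v"
  shows "\<exists>r s u v. compact_svd A r s u v"
proof -
  obtain \<sigma> uu x where spos: "\<sigma> > 0" and uu1: "uu \<bullet> uu = 1" and xx: "x \<bullet> x = 1"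
    and A'x: "(A - \<sigma> *\<^sub>R outer uu x) *v x = 0"
    and uA': "\<And>y. uu \<bullet> ((A - \<sigma> *\<^sub>R outer uu x) *v y) = 0"
    and nul: "\<And>y. A *v y = 0 \<Longrightarrow> (A - \<sigma> *\<^sub>R outer uu x) *v y = 0"
    and Ax: "A *v x \<noteq> 0"
    using deflate[OF assms(1)] by blast
  define A' where "A' = A - \<sigma> *\<^sub>R outer uu x"
  have "{y. A *v y = 0} \<subset> {y. A' *v y = 0}"
    using nul A'x Ax unfolding A'_def by blast
  then have "span {y. A *v y = 0} \<subset> span {y. A' *v y = 0}"
    using null_subspace[of A] null_subspace[of A'] by (metis span_eq_iff)
  then have "dim {y. A *v y = 0} < dim {y. A' *v y = 0}" by (rule dim_psubset)
  from IH[OF this] obtain r s u v where "compact_svd A' r s u v" by blast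
  then have g: "gsvd A' {..<r} s u v" by (simp add: compact_svd_gsvd)
  have ou: "orthon u {..<r}" and ov: "orthon v {..<r}" and sp: "\<forall>i<r. s i > 0"
    and A'eq: "A' = (\<Sum>i<r. s i *\<^sub>R outer (u i) (v i))"
    using g by (auto simp: gsvd_def)
  have uu_u: "uu \<bullet> u i = 0" if "i < r" for i
  proof -
    have "A' *v v i = s i *\<^sub>R u i" using gsvd_v[OF g] that by simp
    then have "s i * (uu \<bullet> u i) = 0" using uA'[of "v i"] unfolding A'_def by (metis inner_scaleR_right)
    then show ?thesis using sp that by force
  qed
  have x_v: "x \<bullet> v i = 0" if "i < r" for i
  proof -
    have "transpose A' *v u i = s i *\<^sub>R v i" using gsvd_u[OF g] that by simp
    moreover have "(transpose A' *v u i) \<bullet> x = 0" unfolding transpose_inner A'_def A'x by simp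
    ultimately have "s i * (v i \<bullet> x) = 0" by simp
    then show ?thesis using sp that by (force simp: inner_commute)
  qed
  define s2 where "s2 = s(r := \<sigma>)"
  define u2 where "u2 = u(r := uu)"
  define v2 where "v2 = v(r := x)"
  have "compact_svd A (Suc r) s2 u2 v2"
    unfolding compact_svd_def
  proof (intro conjI allI impI)
    fix i assume "i < Suc r" then show "s2 i > 0" using sp spos by (auto simp: s2_def)
  next
    fix i j assume "i < Suc r" "j < Suc r"
    then show "u2 i \<bullet> u2 j = (if i = j then 1 else 0)"
      using ou uu1 uu_u by (auto simp: u2_def orthon_def less_Suc_eq inner_commute)
  next
    fix i j assume "i < Suc r" "j < Suc r"
    then show "v2 i \<bullet> v2 j = (if i = j then 1 else 0)"
      using ov xx x_v by (auto simp: v2_def orthon_def less_Suc_eq inner_commute)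
  next
    have "(\<Sum>i<Suc r. s2 i *\<^sub>R outer (u2 i) (v2 i)) = (\<Sum>i<r. s i *\<^sub>R outer (u i) (v i)) + \<sigma> *\<^sub>R outer uu x"
      by (simp add: s2_def u2_def v2_def)
    also have "\<dots> = A" using A'eq unfolding A'_def by (metis diff_add_cancel)
    finally show "A = (\<Sum>i<Suc r. s2 i *\<^sub>R outer (u2 i) (v2 i))" ..
  qed
  then show ?thesis by blast
qed

lemma svd_ex_aux:
  "CARD('n) - dim {y. (A::real^'n^'m) *v y = 0} \<le> N \<Longrightarrow> \<exists>r s u v. compact_svd A r s u v"
proof (induction N arbitrary: A)
  case (0 A)
  show ?case
  proof (cases "A = 0")
    case True then have "compact_svd A 0 (\<lambda>_. 1) (\<lambda>_. 0) (\<lambda>_. 0)" by (simp add: compact_svd_def)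
    then show ?thesis by blast
  next
    case False
    show ?thesis
    proof (rule svd_step[OF False])
      fix A' :: "real^'n^'m" assume "dim {y. A *v y = 0} < dim {y. A' *v y = 0}"
      moreover have "dim {y. A' *v y = 0} \<le> CARD('n)" by (rule dim_subset_UNIV_cart)
      ultimately show "\<exists>r s u v. compact_svd A' r s u v" using "0" by simp
    qed
  qed
next
  case (Suc N A)
  show ?case
  proof (cases "A = 0")
    case True then have "compact_svd A 0 (\<lambda>_. 1) (\<lambda>_. 0) (\<lambda>_. 0)" by (simp add: compact_svd_def)
    then show ?thesis by blast
  next
    case False
    show ?thesis
    proof (rule svd_step[OF False])
      fix A' :: "real^'n^'m" assume "dim {y. A *v y = 0} < dim {y. A' *v y = 0}"
      moreover have "dim {y. A' *v y = 0} \<le> CARD('n)" by (rule dim_subset_UNIV_cart)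
      ultimately have "CARD('n) - dim {y. A' *v y = 0} \<le> N" using Suc.prems by simp
      then show "\<exists>r s u v. compact_svd A' r s u v" by (rule Suc.IH)
    qed
  qed
qed

lemma svd_ex: "\<exists>r s u v. compact_svd (A::real^'n^'m) r s u v"
  by (rule svd_ex_aux[OF order_refl])




lemma orthon_mono: "orthon w I \<Longrightarrow> J \<subseteq> I \<Longrightarrow> orthon w J"
  unfolding orthon_def by blast

theorem proposition4:
  fixes Z :: "real^'n^'m" and Q :: "real^'k^'m" and lam :: real
    and r :: nat and s :: "nat \<Rightarrow> real" and u :: "nat \<Rightarrow> real^'m" and v :: "nat \<Rightarrow> real^'n"
  assumes lam: "lam \<ge> 0"
    and svd: "compact_svd Z r s u v"
    and k: "card {i. i < r \<and> s i > lam} \<le> CARD('k)"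
    and Q_orth: "transpose Q ** Q = mat 1"
    and Q_span: "span {u i | i. i < r \<and> s i > lam} \<subseteq> range (\<lambda>x. Q *v x)"
  shows "svt lam Z = Q ** svt lam (transpose Q ** Z)"
proof -
  have g: "gsvd Z {..<r} s u v" using svd by (simp add: compact_svd_gsvd)
  have ou: "orthon u {..<r}" and ov: "orthon v {..<r}" and sp: "\<forall>i<r. s i > 0"
    and Zeq: "Z = (\<Sum>i<r. s i *\<^sub>R outer (u i) (v i))"
    using g by (auto simp: gsvd_def)
  define Big where "Big = {i. i < r \<and> s i > lam}"
  define Small where "Small = {i. i < r \<and> \<not> s i > lam}"
  have BS: "{..<r} = Big \<union> Small" "Big \<inter> Small = {}" "finite Big" "finite Small"
    "Big \<subseteq> {..<r}" "Small \<subseteq> {..<r}"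
    by (auto simp: Big_def Small_def)
  have QtQ: "transpose Q *v (Q *v y) = y" for y
    by (simp add: matrix_vector_mul_assoc Q_orth del: transpose_matrix_vector)
  have PQ: "Q *v (transpose Q *v u i) = u i" if "i \<in> Big" for i
  proof -
    have "u i \<in> span {u i | i. i < r \<and> s i > lam}"
      using that by (intro span_base) (auto simp: Big_def)
    with Q_span obtain y where "u i = Q *v y" by blast
    then show ?thesis by (simp only: QtQ)
  qed
  have Qt_inner: "(transpose Q *v w) \<bullet> (transpose Q *v u i) = w \<bullet> u i" if "i \<in> Big" for w i
    by (simp only: transpose_inner PQ[OF that])
  have Qt_le: "(transpose Q *v w) \<bullet> (transpose Q *v w) \<le> w \<bullet> w" for w
  proof -
    define z where "z = transpose Q *v w"
    have 1: "w \<bullet> (Q *v z) = z \<bullet> z" by (simp only: z_def transpose_inner[symmetric])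
    have 2: "(Q *v z) \<bullet> (Q *v z) = z \<bullet> z" by (metis QtQ transpose_inner)
    have "0 \<le> (w - Q *v z) \<bullet> (w - Q *v z)" by simp
    also have "\<dots> = w \<bullet> w - 2 * (w \<bullet> (Q *v z)) + (Q *v z) \<bullet> (Q *v z)"
      by (simp add: algebra_simps inner_commute)
    finally show ?thesis using 1 2 by (simp add: z_def)
  qed
  define Zs where "Zs = (\<Sum>i\<in>Small. s i *\<^sub>R outer (u i) (v i))"
  define Zb where "Zb = (\<Sum>i\<in>Big. s i *\<^sub>R outer (u i) (v i))"
  have ZZ: "Z = Zb + Zs" unfolding Zeq Zb_def Zs_def BS(1)
    by (rule sum.union_disjoint) (use BS in auto)
  define C where "C = transpose Q ** Zs"
  obtain rc \<sigma> a b where "compact_svd C rc \<sigma> a b" using svd_ex by blast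
  then have gc: "gsvd C {..<rc} \<sigma> a b" by (simp add: compact_svd_gsvd)
  have oa: "orthon a {..<rc}" and ob: "orthon b {..<rc}" and sigp: "\<forall>j<rc. \<sigma> j > 0"
    and Ceq: "C = (\<Sum>j<rc. \<sigma> j *\<^sub>R outer (a j) (b j))"
    using gc by (auto simp: gsvd_def)
  have Zs_mv: "Zs *v y = (\<Sum>l\<in>Small. (s l * (v l \<bullet> y)) *\<^sub>R u l)" for y
    by (simp add: Zs_def outer_sum_mv)
  have C_mv: "C *v y = transpose Q *v (Zs *v y)" for y
    by (simp add: C_def matrix_vector_mul_assoc del: transpose_matrix_vector)
  have Zs_vi: "Zs *v v i = 0" if "i \<in> Big" for i
    unfolding Zs_mv
  proof (intro sum.neutral ballI)
    fix l assume "l \<in> Small"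
    then have "l \<noteq> i" "l < r" "i < r" using that by (auto simp: Big_def Small_def)
    then show "(s l * (v l \<bullet> v i)) *\<^sub>R u l = 0" using ov by (simp add: orthon_def)
  qed
  have mix_u: "(transpose Q *v u i) \<bullet> a j = 0" if "i \<in> Big" "j < rc" for i j
  proof -
    have "C *v b j = \<sigma> j *\<^sub>R a j" using gsvd_v[OF gc] that by simp
    moreover have "(transpose Q *v u i) \<bullet> (C *v b j) = 0"
    proof -
      have "(transpose Q *v u i) \<bullet> (C *v b j) = u i \<bullet> (Zs *v b j)"
        unfolding C_mv by (metis Qt_inner[OF that(1)] inner_commute)
      also have "\<dots> = 0" unfolding Zs_mv
        by (rule orthon_coef0[OF ou]) (use that in \<open>auto simp: Big_def Small_def\<close>)
      finally show ?thesis .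
    qed
    ultimately have "\<sigma> j * ((transpose Q *v u i) \<bullet> a j) = 0" by simp
    then show ?thesis using sigp that by force
  qed
  have mix_v: "v i \<bullet> b j = 0" if "i \<in> Big" "j < rc" for i j
  proof -
    have "transpose C *v a j = \<sigma> j *\<^sub>R b j" using gsvd_u[OF gc] that by simp
    moreover have "(transpose C *v a j) \<bullet> v i = 0"
      unfolding transpose_inner C_mv Zs_vi[OF that(1)] by simp
    ultimately have "\<sigma> j * (v i \<bullet> b j) = 0" by (simp add: inner_commute)
    then show ?thesis using sigp that by force
  qed
  have sig_le: "\<sigma> j \<le> lam" if "j < rc" for j
  proof -
    have aa: "a j \<bullet> a j = 1" and bb: "b j \<bullet> b j = 1" using oa ob that by (auto simp: orthon_def)
    have "(\<sigma> j)^2 = (\<sigma> j *\<^sub>R a j) \<bullet> (\<sigma> j *\<^sub>R a j)" using aa by (simp add: power2_eq_square)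
    also have "\<dots> = (C *v b j) \<bullet> (C *v b j)" using gsvd_v[OF gc] that by simp
    also have "\<dots> \<le> (Zs *v b j) \<bullet> (Zs *v b j)" unfolding C_mv by (rule Qt_le)
    also have "\<dots> = (\<Sum>l\<in>Small. (s l * (v l \<bullet> b j))^2)"
      unfolding Zs_mv by (rule orthon_norm2[OF orthon_mono[OF ou BS(6)] BS(4)])
    also have "\<dots> \<le> (\<Sum>l\<in>Small. lam^2 * (v l \<bullet> b j)^2)"
    proof (rule sum_mono)
      fix l assume "l \<in> Small"
      then have "0 < s l" "s l \<le> lam" using sp by (auto simp: Small_def)
      then have "(s l)^2 \<le> lam^2" by (simp add: power_mono)
      then show "(s l * (v l \<bullet> b j))^2 \<le> lam^2 * (v l \<bullet> b j)^2"
        by (simp add: power_mult_distrib mult_right_mono)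
    qed
    also have "\<dots> = lam^2 * (\<Sum>l\<in>Small. (v l \<bullet> b j)^2)" by (simp add: sum_distrib_left)
    also have "\<dots> \<le> lam^2 * (b j \<bullet> b j)"
      by (rule mult_left_mono[OF bessel[OF orthon_mono[OF ov BS(6)] BS(4)]]) simp
    finally have "(\<sigma> j)^2 \<le> lam^2" using bb by simp
    then show ?thesis using lam by (rule power2_le_imp_le)
  qed
  define I' where "I' = Big \<union> (\<lambda>j. r + j) ` {..<rc}"
  define s2 where "s2 i = (if i < r then s i else \<sigma> (i - r))" for i
  define u2 where "u2 i = (if i < r then transpose Q *v u i else a (i - r))" for i
  define v2 where "v2 i = (if i < r then v i else b (i - r))" for i
  have disj: "Big \<inter> (\<lambda>j. r + j) ` {..<rc} = {}" by (auto simp: Big_def)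
  have sumI: "(\<Sum>i\<in>I'. f i) = (\<Sum>i\<in>Big. f i) + (\<Sum>j<rc. f (r + j))" for f :: "nat \<Rightarrow> real^'n^'k"
  proof -
    have "(\<Sum>i\<in>I'. f i) = (\<Sum>i\<in>Big. f i) + (\<Sum>i\<in>(\<lambda>j. r + j) ` {..<rc}. f i)"
      unfolding I'_def by (rule sum.union_disjoint) (use BS disj in auto)
    also have "(\<Sum>i\<in>(\<lambda>j. r + j) ` {..<rc}. f i) = (\<Sum>j<rc. f (r + j))"
      by (subst sum.reindex) (auto simp: inj_on_def)
    finally show ?thesis .
  qed
  have inBig: "i < r" if "i \<in> Big" for i using that by (simp add: Big_def)
  have B_eq: "transpose Q ** Z = (\<Sum>i\<in>Big. s i *\<^sub>R outer (transpose Q *v u i) (v i)) + C"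
    unfolding ZZ C_def Zb_def by (simp add: matrix_add_ldistrib mm_sum mm_scaleR mm_outer)
  have gB: "gsvd (transpose Q ** Z) I' s2 u2 v2"
    unfolding gsvd_def
  proof (intro conjI)
    show "finite I'" using BS by (simp add: I'_def)
    show "\<forall>i\<in>I'. 0 < s2 i" using sp sigp inBig by (auto simp: I'_def s2_def)
    show "orthon u2 I'" unfolding orthon_def
    proof (intro ballI)
      fix i j assume "i \<in> I'" "j \<in> I'"
      then consider "i \<in> Big" "j \<in> Big" | i' where "i \<in> Big" "j = r + i'" "i' < rc"
        | j' where "i = r + j'" "j \<in> Big" "j' < rc" | i' j' where "i = r + i'" "j = r + j'" "i' < rc" "j' < rc"
        unfolding I'_def by blast
      then show "u2 i \<bullet> u2 j = (if i = j then 1 else 0)"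
      proof cases
        case 1 then show ?thesis using ou Qt_inner inBig by (simp add: u2_def orthon_def)
      next
        case 2 then show ?thesis using mix_u inBig by (auto simp: u2_def)
      next
        case 3 then show ?thesis using mix_u inBig by (auto simp: u2_def inner_commute)
      next
        case 4 then show ?thesis using oa by (auto simp: u2_def orthon_def)
      qed
    qed
    show "orthon v2 I'" unfolding orthon_def
    proof (intro ballI)
      fix i j assume "i \<in> I'" "j \<in> I'"
      then consider "i \<in> Big" "j \<in> Big" | i' where "i \<in> Big" "j = r + i'" "i' < rc"
        | j' where "i = r + j'" "j \<in> Big" "j' < rc" | i' j' where "i = r + i'" "j = r + j'" "i' < rc" "j' < rc"
        unfolding I'_def by blast
      then show "v2 i \<bullet> v2 j = (if i = j then 1 else 0)"
      proof cases
        case 1 then show ?thesis using ov inBig by (simp add: v2_def orthon_def)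
      next
        case 2 then show ?thesis using mix_v inBig by (auto simp: v2_def)
      next
        case 3 then show ?thesis using mix_v inBig by (auto simp: v2_def inner_commute)
      next
        case 4 then show ?thesis using ob by (auto simp: v2_def orthon_def)
      qed
    qed
    show "transpose Q ** Z = (\<Sum>i\<in>I'. s2 i *\<^sub>R outer (u2 i) (v2 i))"
      unfolding sumI B_eq Ceq using inBig by (simp add: s2_def u2_def v2_def)
  qed
  have "svt lam (transpose Q ** Z) = (\<Sum>i\<in>I'. max (s2 i - lam) 0 *\<^sub>R outer (u2 i) (v2 i))"
    by (rule svt_gsvd[OF gB svd_ex])
  also have "\<dots> = (\<Sum>i\<in>Big. (s i - lam) *\<^sub>R outer (transpose Q *v u i) (v i))"
    unfolding sumI using inBig sig_le by (simp add: s2_def u2_def v2_def Big_def)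
  finally have R: "Q ** svt lam (transpose Q ** Z) = (\<Sum>i\<in>Big. (s i - lam) *\<^sub>R outer (u i) (v i))"
    by (simp add: mm_sum mm_scaleR mm_outer PQ del: transpose_matrix_vector)
  have "svt lam Z = (\<Sum>i<r. max (s i - lam) 0 *\<^sub>R outer (u i) (v i))"
    by (rule svt_gsvd[OF g svd_ex])
  also have "\<dots> = (\<Sum>i\<in>Big. max (s i - lam) 0 *\<^sub>R outer (u i) (v i))"
    by (rule sum.mono_neutral_right) (auto simp: Big_def)
  also have "\<dots> = (\<Sum>i\<in>Big. (s i - lam) *\<^sub>R outer (u i) (v i))"
    by (rule sum.cong) (auto simp: Big_def)
  finally show ?thesis using R by simp
qed


end
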